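(* Let $r\ge2$ and let $\lambda$ be a partition of length $r$ with degree sequence $(n_1,n_2,\dots,n_r)$ (increasing). Let $\mu_1$ be the partition with degree sequence $(n_1,\dots,n_{r-1})$ and $\mu_2$ the partition with degree sequence $(n_1,\dots,n_{r-2},n_r)$. If $R_{\mu_1}(x)$ is irreducible (non-constant and irreducible over $\mathbb{Q}$) and $R_{\mu_1}(x)$ divides $R_\lambda(x)$, then $R_{\mu_1}(x)$ divides $R_{\mu_2}(x)$.
   Context: $\mathrm{He}_k(x)$ denotes the monic probabilists' Hermite polynomial of degree $k$. A partition $\lambda=(\lambda_1\ge\dots\ge\lambda_r\ge0)$ may have zero parts; its degree sequence is $n_\lambda=(\lambda_r,\lambda_{r-1}+1,\dots,\lambda_1+r-1)$, and any set of $r$ distinct non-negative integers is the degree sequence of exactly one partition of length $r$. $\mathrm{He}_\lambda=\mathrm{Wr}[\mathrm{He}_{n_1},\dots,\mathrm{He}_{n_r}]/\prod_{i<j}(n_j-n_i)$. Removing a $2$-hook means replacing an entry $a$ of $n_\lambda$ by $a-2\ge0$ with $a-2\notin n_\lambda$; removing $2$-hooks until impossible yields the $2$-core $\bar\lambda$, and $\mathrm{He}_\lambda(x)=x^{|\bar\lambda|}R_\lambda(x)$ with $R_\lambda\in\mathbb{Z}[x]$, $R_\lambda(0)\ne0$. *)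

theory Defs
  imports "HOL-Computational_Algebra.Polynomial" "Jordan_Normal_Form.Determinant"
begin

text \<open>Monic probabilists' Hermite polynomials He_k, via He_{k+2} = x He_{k+1} - (k+1) He_k.\<close>
fun herm :: "nat \<Rightarrow> rat poly" where
  "herm 0 = 1"
| "herm (Suc 0) = [:0, 1:]"
| "herm (Suc (Suc k)) = [:0, 1:] * herm (Suc k) - smult (of_nat (Suc k)) (herm k)"

definition wronskian :: "rat poly list \<Rightarrow> rat poly" where
  "wronskian fs = det (mat (length fs) (length fs) (\<lambda>(i, j). (pderiv ^^ i) (fs ! j)))"

text \<open>Generalised Hermite polynomial He_lambda, where the partition lambda is given by its
  (strictly increasing) degree sequence ns = (n_1,...,n_r).\<close>
definition hermP :: "nat list \<Rightarrow> rat poly" where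
  "hermP ns = smult (inverse (\<Prod>(i, j) \<in> {(i, j). i < j \<and> j < length ns}.
                                 of_nat (ns ! j - ns ! i)))
                    (wronskian (map herm ns))"

text \<open>Removing a 2-hook, on degree sequences viewed as finite sets of naturals.\<close>
definition remove_2hook :: "nat set \<Rightarrow> nat set \<Rightarrow> bool" where
  "remove_2hook N M \<longleftrightarrow> (\<exists>a \<in> N. 2 \<le> a \<and> a - 2 \<notin> N \<and> M = insert (a - 2) (N - {a}))"

definition two_core :: "nat set \<Rightarrow> nat set" where
  "two_core N = (SOME M. remove_2hook\<^sup>*\<^sup>* N M \<and> (\<nexists>M'. remove_2hook M M'))"

definition part_size :: "nat set \<Rightarrow> nat" where
  "part_size N = \<Sum>N - card N * (card N - 1) div 2"

definition hermR :: "nat list \<Rightarrow> rat poly" where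
  "hermR ns = hermP ns div [:0, 1:] ^ part_size (two_core (set ns))"

end

theory Submission
  imports Defs "HOL-Computational_Algebra.Field_as_Ring" "HOL-Computational_Algebra.Polynomial_Factorial"
begin


abbreviation XX :: "rat poly" where "XX \<equiv> [:0, 1:]"

lemma X_pow_monom: "([:0,1:] :: 'a::comm_ring_1 poly) ^ n = monom 1 n"
  by (simp add: monom_altdef)

lemma X_mult_pCons: "[:0,1:] * (p :: 'a::comm_ring_1 poly) = pCons 0 p"
  by simp

lemma pderiv_herm: "pderiv (herm (Suc n)) = smult (of_nat (Suc n)) (herm n)"
proof (induction n rule: herm.induct)
  case 1
  then show ?case by (simp add: pderiv_pCons)
next
  case 2
  then show ?case by (simp add: pderiv_pCons pderiv_mult pderiv_diff numeral_2_eq_2)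
next
  case (3 k)
  have "pderiv (herm (Suc (Suc (Suc k)))) =
     herm (Suc (Suc k)) + [:0,1:] * pderiv (herm (Suc (Suc k))) - smult (of_nat (Suc (Suc k))) (pderiv (herm (Suc k)))"
    by (simp only: herm.simps pderiv_diff pderiv_mult pderiv_smult) (simp add: pderiv_pCons)
  also have "\<dots> = herm (Suc (Suc k)) + smult (of_nat (Suc (Suc k))) ([:0,1:] * herm (Suc k) - smult (of_nat (Suc k)) (herm k))"
    using 3 by (simp add: algebra_simps smult_diff_right)
  also have "\<dots> = herm (Suc (Suc k)) + smult (of_nat (Suc (Suc k))) (herm (Suc (Suc k)))"
    by (simp only: herm.simps(3))
  also have "\<dots> = smult (of_nat (Suc (Suc (Suc k)))) (herm (Suc (Suc k)))"
    by (simp only: of_nat_Suc smult_add_left smult_one) simp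
  finally show ?case .
qed

lemma herm_parity: "odd (n + s) \<Longrightarrow> coeff (herm n) s = 0"
proof (induction n arbitrary: s rule: herm.induct)
  case 1 then show ?case by (cases s) auto
next
  case 2 then show ?case by (cases s; cases "s - 1") auto
next
  case (3 k)
  show ?case
  proof (cases s)
    case 0 then show ?thesis using 3 by simp
  next
    case (Suc s') then show ?thesis using 3 by simp
  qed
qed

lemma herm_even0: "coeff (herm (2*m)) 0 \<noteq> 0"
proof (induction m)
  case 0 then show ?case by simp
next
  case (Suc m)
  have "herm (2 * Suc m) = herm (Suc (Suc (2*m)))" by simp
  then show ?case using Suc by simp
qed

lemma herm_odd1: "coeff (herm (Suc (2*m))) 1 \<noteq> 0"
proof -
  have a: "coeff (pderiv (herm (Suc (2*m)))) 0 = coeff (herm (Suc (2*m))) 1"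
    by (simp only: coeff_pderiv) simp
  have "pderiv (herm (Suc (2*m))) = smult (of_nat (Suc (2*m))) (herm (2*m))"
    by (rule pderiv_herm)
  then have "coeff (pderiv (herm (Suc (2*m)))) 0 = of_nat (Suc (2*m)) * coeff (herm (2*m)) 0"
    by (simp only: coeff_smult)
  then have "coeff (pderiv (herm (Suc (2*m)))) 0 \<noteq> 0"
    using herm_even0[of m] by (simp only: mult_eq_0_iff of_nat_eq_0_iff) simp
  with a show ?thesis by simp
qed

lemma herm_low: "coeff (herm n) (n mod 2) \<noteq> 0"
proof (cases "even n")
  case True then obtain m where "n = 2*m" using evenE by blast
  then show ?thesis using herm_even0[of m] by (simp only:) simp
next
  case False then obtain m where "n = Suc (2*m)" by (metis oddE Suc_eq_plus1)
  moreover have "Suc (2*m) mod 2 = 1" by simp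
  ultimately show ?thesis using herm_odd1[of m] by (simp only:) simp
qed

lemma herm_ode: "pderiv (pderiv (herm n)) - [:0,1:] * pderiv (herm n) + smult (of_nat n) (herm n) = 0"
proof (cases n)
  case 0 then show ?thesis by simp
next
  case (Suc m)
  show ?thesis
  proof (cases m)
    case 0 then show ?thesis using Suc by (simp add: pderiv_pCons)
  next
    case (Suc k)
    have d1: "pderiv (herm n) = smult (of_nat n) (herm m)"
      using `n = Suc m` by (simp only: pderiv_herm)
    have d2: "pderiv (herm m) = smult (of_nat m) (herm k)"
      using Suc by (simp only: pderiv_herm)
    have e1: "pderiv (pderiv (herm n)) = smult (of_nat n * of_nat m) (herm k)"
      by (simp only: d1 d2 pderiv_smult smult_smult)
    have e3: "herm n = [:0,1:] * herm m - smult (of_nat m) (herm k)"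
      using `n = Suc m` Suc by (simp only: herm.simps)
    show ?thesis
      apply (subst e1, subst d1, subst e3)
      by (simp add: algebra_simps smult_diff_right)
  qed
qed


lemma pderiv_sum: "pderiv (sum f A) = (\<Sum>x\<in>A. pderiv (f x))"
  by (rule poly_eqI) (simp add: coeff_pderiv coeff_sum sum_distrib_left)

lemma monom_dvd_pderiv: "monom 1 (Suc k) dvd p \<Longrightarrow> monom 1 k dvd pderiv p"
  unfolding monom_1_dvd_iff' by (simp add: coeff_pderiv)

definition Lop :: "rat poly \<Rightarrow> rat poly" where
  "Lop p = pderiv (pderiv p) - [:0,1:] * pderiv p"

lemma Lop_dvd: "monom 1 (Suc (Suc k)) dvd p \<Longrightarrow> monom 1 k dvd Lop p"
proof -
  assume a: "monom 1 (Suc (Suc k)) dvd p"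
  have 1: "monom 1 (Suc k) dvd pderiv p" using monom_dvd_pderiv[OF a] .
  have 2: "monom 1 k dvd pderiv (pderiv p)" using monom_dvd_pderiv[OF 1] .
  have "monom 1 k dvd monom 1 (Suc k)" by (simp add: monom_1_dvd_iff')
  then have 3: "monom 1 k dvd pderiv p" using 1 dvd_trans by blast
  show ?thesis unfolding Lop_def by (rule dvd_diff[OF 2 dvd_mult[OF 3]])
qed

lemma Lop_herm: "Lop (herm n) = - smult (of_nat n) (herm n)"
  using herm_ode[of n] unfolding Lop_def by (simp add: algebra_simps eq_neg_iff_add_eq_0)

lemma smult_sum_right: "smult a (sum f A) = (\<Sum>x\<in>A. smult a (f x))"
  by (rule poly_eqI) (simp add: coeff_sum sum_distrib_left)

lemma Lop_smult: "Lop (smult a p) = smult a (Lop p)"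
  unfolding Lop_def by (simp add: pderiv_smult smult_diff_right)

lemma Lop_sum_gen: "Lop (sum f A) = (\<Sum>x\<in>A. Lop (f x))"
  unfolding Lop_def pderiv_sum by (simp add: sum_subtractf sum_distrib_left)

lemma Lop_sum: "Lop (\<Sum>n\<in>S. smult (c n) (herm n)) = (\<Sum>n\<in>S. smult (- c n * of_nat n) (herm n))"
  unfolding Lop_sum_gen Lop_smult Lop_herm by (simp add: algebra_simps)

lemma kernel_lemma:
  assumes "finite S" "\<forall>n\<in>S. n mod 2 = q"
    and "monom 1 (2 * card S + q) dvd (\<Sum>n\<in>S. smult (c n) (herm n))"
  shows "\<forall>n\<in>S. c n = 0"
  using assms
proof (induction S arbitrary: c rule: finite_induct)
  case empty then show ?case by simp
next
  case (insert n0 S)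
  let ?v = "\<Sum>n\<in>insert n0 S. smult (c n) (herm n)"
  have v: "?v = smult (c n0) (herm n0) + (\<Sum>n\<in>S. smult (c n) (herm n))"
    using insert by simp
  have cS: "card (insert n0 S) = Suc (card S)" using insert by simp
  have dv: "monom 1 (Suc (Suc (2 * card S + q))) dvd ?v"
    using insert(5) cS by simp
  have w0: "Lop ?v + smult (of_nat n0) ?v = (\<Sum>n\<in>insert n0 S. smult (c n * (of_nat n0 - of_nat n)) (herm n))"
    unfolding Lop_sum smult_sum_right sum.distrib[symmetric] smult_smult smult_add_left[symmetric]
    by (rule sum.cong) (simp_all add: algebra_simps)
  have w: "Lop ?v + smult (of_nat n0) ?v = (\<Sum>n\<in>S. smult (c n * (of_nat n0 - of_nat n)) (herm n))"
    unfolding w0 using insert(1,2) by simp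
  have "monom 1 (2 * card S + q) dvd Lop ?v + smult (of_nat n0) ?v"
  proof (rule dvd_add)
    show "monom 1 (2 * card S + q) dvd Lop ?v" using Lop_dvd[OF dv] .
    have "monom 1 (2 * card S + q) dvd ?v"
      using dv by (meson dvd_trans monom_1_dvd_iff' less_Suc_eq)
    then show "monom 1 (2 * card S + q) dvd smult (of_nat n0) ?v" by (simp add: dvd_smult)
  qed
  then have "\<forall>n\<in>S. c n * (of_nat n0 - of_nat n) = 0"
    using insert.IH[of "\<lambda>n. c n * (of_nat n0 - of_nat n)"] insert(4) w by simp
  then have cS0: "\<forall>n\<in>S. c n = 0" using insert(2) by auto
  then have "?v = smult (c n0) (herm n0)" using v by simp
  then have "coeff (smult (c n0) (herm n0)) q = 0"
    using dv unfolding monom_1_dvd_iff' by simp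
  then have "c n0 = 0" using herm_low[of n0] insert(4) by simp
  then show ?case using cS0 by simp
qed


definition ff :: "nat \<Rightarrow> nat \<Rightarrow> rat" where
  "ff t i = (\<Prod>k<i. of_nat t - of_nat k)"

definition ffp :: "nat \<Rightarrow> rat poly" where
  "ffp i = (\<Prod>k<i. [:- of_nat k, 1:])"

lemma poly_ffp: "poly (ffp i) (of_nat t) = ff t i"
  unfolding ffp_def ff_def poly_prod by simp

lemma ffp_deg: "degree (ffp d) = d \<and> lead_coeff (ffp d) = 1"
proof (induction d)
  case 0 then show ?case by (simp add: ffp_def)
next
  case (Suc d)
  have e: "ffp (Suc d) = ffp d * [:- of_nat d, 1:]" by (simp add: ffp_def)
  have nz: "ffp d \<noteq> 0" using Suc by auto
  have "degree (ffp d * [:- of_nat d, 1:]) = degree (ffp d) + degree ([:- of_nat d, 1:] :: rat poly)"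
    by (rule degree_mult_eq) (use nz in auto)
  moreover have "lead_coeff (ffp d * [:- of_nat d, 1:]) = lead_coeff (ffp d) * lead_coeff ([:- of_nat d, 1:] :: rat poly)"
    by (rule lead_coeff_mult)
  ultimately show ?case unfolding e using Suc by (auto simp del: mult_pCons_right mult_pCons_left)
qed

lemma ff_zero: "t < i \<Longrightarrow> ff t i = 0"
  unfolding ff_def by (rule prod_zero) auto

lemma ff_span:
  assumes h: "\<forall>i<r. (\<Sum>j<r. ff (t j) i * v j) = 0"
  shows "degree q < r \<Longrightarrow> (\<Sum>j<r. poly q (of_nat (t j)) * v j) = 0"
proof (induction "degree q" arbitrary: q rule: less_induct)
  case less
  define d where "d = degree q"
  define q' where "q' = q - smult (lead_coeff q) (ffp d)"
  have fd: "degree (ffp d) = d" "lead_coeff (ffp d) = 1" using ffp_deg[of d] by auto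
  have s1: "(\<Sum>j<r. poly q (of_nat (t j)) * v j) =
     lead_coeff q * (\<Sum>j<r. ff (t j) d * v j) + (\<Sum>j<r. poly q' (of_nat (t j)) * v j)"
    unfolding q'_def by (simp add: poly_ffp sum_distrib_left sum.distrib[symmetric] algebra_simps)
  have s2: "(\<Sum>j<r. ff (t j) d * v j) = 0" using h less(2) d_def by auto
  show ?case
  proof (cases "d = 0")
    case True
    have "ffp 0 = 1" by (simp add: ffp_def)
    moreover have "[:coeff q 0:] = q" using True d_def by (simp add: degree_0_id)
    ultimately have "q' = 0" unfolding q'_def using True d_def
      by (metis diff_self smult_one)
    then show ?thesis using s1 s2 by simp
  next
    case False
    have "degree q' \<le> d - 1"
    proof (rule degree_le, intro allI impI)
      fix i assume "d - 1 < i"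
      then have "i \<ge> d" using False by simp
      show "coeff q' i = 0"
      proof (cases "i = d")
        case True then show ?thesis unfolding q'_def using fd d_def by simp
      next
        case False
        then have "i > d" using `i \<ge> d` by simp
        then show ?thesis unfolding q'_def using fd d_def by (simp add: coeff_eq_0)
      qed
    qed
    then have "degree q' < degree q" using False d_def by simp
    then have "(\<Sum>j<r. poly q' (of_nat (t j)) * v j) = 0" using less by simp
    then show ?thesis using s1 s2 by simp
  qed
qed

lemma ff_det_nonzero:
  assumes inj: "inj_on t {..<r}"
  shows "det (mat r r (\<lambda>(i,j). ff (t j) i)) \<noteq> 0"
proof
  let ?F = "mat r r (\<lambda>(i,j). ff (t j) i)"
  assume "det ?F = 0"
  then obtain v where v: "v \<in> carrier_vec r" "v \<noteq> 0\<^sub>v r" "?F *\<^sub>v v = 0\<^sub>v r"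
    using det_0_iff_vec_prod_zero_field[of ?F r] by auto
  have h: "\<forall>i<r. (\<Sum>j<r. ff (t j) i * v $ j) = 0"
  proof (intro allI impI)
    fix i assume i: "i < r"
    have "(?F *\<^sub>v v) $ i = 0" using v(3) i by simp
    then show "(\<Sum>j<r. ff (t j) i * v $ j) = 0"
      using i v(1) by (simp add: scalar_prod_def Matrix.row_def lessThan_atLeast0)
  qed
  have "\<forall>j0<r. v $ j0 = 0"
  proof (intro allI impI)
    fix j0 assume j0: "j0 < r"
    define q where "q = (\<Prod>l\<in>{..<r} - {j0}. [:- of_nat (t l), 1:] :: rat poly)"
    have "degree q = card ({..<r} - {j0})" unfolding q_def
      by (subst degree_prod_eq_sum_degree) auto
    also have "\<dots> < r" using j0 by simp
    finally have dq: "degree q < r" .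
    have "(\<Sum>j<r. poly q (of_nat (t j)) * v $ j) = 0"
      using ff_span[OF h dq] .
    moreover have "(\<Sum>j<r. poly q (of_nat (t j)) * v $ j) = poly q (of_nat (t j0)) * v $ j0"
    proof -
      have "(\<Sum>j<r. poly q (of_nat (t j)) * v $ j) = poly q (of_nat (t j0)) * v $ j0 +
          (\<Sum>j\<in>{..<r} - {j0}. poly q (of_nat (t j)) * v $ j)"
        using j0 by (subst sum.remove[of _ j0]) auto
      moreover have "(\<Sum>j\<in>{..<r} - {j0}. poly q (of_nat (t j)) * v $ j) = 0"
      proof (rule sum.neutral, intro ballI)
        fix j assume "j \<in> {..<r} - {j0}"
        then have "poly q (of_nat (t j)) = 0" unfolding q_def poly_prod
          by (intro prod_zero) auto
        then show "poly q (of_nat (t j)) * v $ j = 0" by simp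
      qed
      ultimately show ?thesis by simp
    qed
    moreover have "poly q (of_nat (t j0)) \<noteq> 0"
    proof -
      have "\<forall>l\<in>{..<r}-{j0}. poly [:- of_nat (t l), 1:] (of_nat (t j0)) \<noteq> (0::rat)"
        using inj j0 by (auto simp: inj_on_def)
      then show ?thesis unfolding q_def poly_prod by simp
    qed
    ultimately show "v $ j0 = 0" by simp
  qed
  then have "v = 0\<^sub>v r" using v(1) by (intro eq_vecI) auto
  with v(2) show False by simp
qed


definition WM :: "rat poly list \<Rightarrow> rat poly mat" where
  "WM fs = mat (length fs) (length fs) (\<lambda>(i,j). (pderiv ^^ i) (fs ! j))"

lemma wr_WM: "wronskian fs = det (WM fs)"
  by (simp add: wronskian_def WM_def)

lemma WM_carrier: "WM fs \<in> carrier_mat (length fs) (length fs)"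
  by (simp add: WM_def)

lemma coeff_pderiv_pow: "coeff ((pderiv ^^ i) p) s = (\<Prod>k<i. of_nat (s + i - k)) * coeff p (s + i)"
proof (induction i arbitrary: s)
  case 0 then show ?case by simp
next
  case (Suc i)
  have "coeff ((pderiv ^^ Suc i) p) s = of_nat (Suc s) * coeff ((pderiv ^^ i) p) (Suc s)"
    by (simp add: coeff_pderiv)
  also have "\<dots> = of_nat (Suc s) * ((\<Prod>k<i. of_nat (Suc s + i - k)) * coeff p (Suc s + i))"
    using Suc by simp
  also have "\<dots> = (\<Prod>k<Suc i. of_nat (s + Suc i - k)) * coeff p (s + Suc i)"
    by (simp add: prod.lessThan_Suc mult_ac)
  finally show ?case .
qed

lemma sum_card_le: "finite (S :: nat set) \<Longrightarrow> (\<Sum>i<card S. i) \<le> \<Sum>S"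
proof (induction "card S" arbitrary: S)
  case 0 then show ?case by simp
next
  case (Suc n)
  then have ne: "S \<noteq> {}" by auto
  define m where "m = Max S"
  have mS: "m \<in> S" using Suc ne m_def by simp
  have "S \<subseteq> {..m}" using Suc m_def by auto
  then have "card S \<le> card {..m}" by (intro card_mono) auto
  then have nm: "n \<le> m" using Suc by simp
  have c: "card (S - {m}) = n" using Suc mS by simp
  have "(\<Sum>i<n. i) \<le> \<Sum>(S - {m})" using Suc.hyps(1)[of "S - {m}"] c Suc(3) by simp
  moreover have "\<Sum>S = m + \<Sum>(S - {m})" using Suc mS by (simp add: sum.remove)
  ultimately show ?case using nm `Suc n = card S`[symmetric] by simp
qed

lemma prod_monom: "finite A \<Longrightarrow> (\<Prod>i\<in>A. monom (1::'a::comm_semiring_1) (d i)) = monom 1 (\<Sum>i\<in>A. d i)"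
  by (induction A rule: finite_induct) (auto simp: mult_monom)

lemma wronskian_val:
  assumes len: "length gs = r" and inj: "inj_on t {..<r}"
    and z: "\<forall>j<r. \<forall>s<t j. coeff (gs!j) s = 0" and o: "\<forall>j<r. coeff (gs!j) (t j) = 1"
  shows "\<exists>Q. wronskian gs = monom 1 ((\<Sum>j<r. t j) - (\<Sum>i<r. i)) * Q
             \<and> poly Q 0 = det (mat r r (\<lambda>(i,j). ff (t j) i))"
proof -
  define K where "K = (\<Sum>j<r. t j) - (\<Sum>i<r. i)"
  define E where "E i j = (pderiv ^^ i) (gs!j)" for i j
  define Qf where "Qf i j = E i j div monom 1 (t j - i)" for i j
  have dvdE: "monom 1 (t j - i) dvd E i j" if "j < r" for i j
    unfolding monom_1_dvd_iff' E_def coeff_pderiv_pow using z that by auto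
  have EQ: "E i j = monom 1 (t j - i) * Qf i j" if "j < r" for i j
    unfolding Qf_def using dvdE[OF that] by simp
  have Qf0: "poly (Qf i j) 0 = ff (t j) i" if "j < r" "i \<le> t j" for i j
  proof -
    have "poly (Qf i j) 0 = coeff (monom 1 (t j - i) * Qf i j) (t j - i)"
      by (simp add: poly_0_coeff_0 coeff_monom_mult)
    also have "\<dots> = coeff (E i j) (t j - i)" using EQ[OF that(1)] by simp
    also have "\<dots> = (\<Prod>k<i. of_nat (t j - k))"
      unfolding E_def coeff_pderiv_pow using that o by simp
    also have "\<dots> = ff (t j) i" unfolding ff_def
      by (rule prod.cong) (use that in \<open>auto simp: of_nat_diff\<close>)
    finally show ?thesis .
  qed
  have st: "(\<Sum>i<r. i) \<le> (\<Sum>j<r. t j)"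
  proof -
    have "card (t ` {..<r}) = r" using inj by (simp add: card_image)
    then have "(\<Sum>i<r. i) \<le> \<Sum>(t ` {..<r})" using sum_card_le[of "t ` {..<r}"] by simp
    also have "\<dots> = (\<Sum>j<r. t j)" using inj by (simp add: sum.reindex)
    finally show ?thesis .
  qed
  define P where "P = {p. p permutes {0..<r}}"
  define D where "D p = (\<Sum>i\<in>{0..<r}. t (p i) - i)" for p
  have sumt: "(\<Sum>i\<in>{0..<r}. t (p i)) = (\<Sum>j<r. t j)" if "p \<in> P" for p
  proof -
    have "bij_betw p {0..<r} {0..<r}" using that unfolding P_def by (simp add: permutes_imp_bij)
    then have "(\<Sum>i\<in>{0..<r}. t (p i)) = (\<Sum>j\<in>{0..<r}. t j)" by (rule sum.reindex_bij_betw)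
    then show ?thesis by (simp add: atLeast0LessThan)
  qed
  have pr: "p i < r" if "p \<in> P" "i < r" for p i
    using that unfolding P_def by (simp add: permutes_in_image)
  have DK: "K \<le> D p" if "p \<in> P" for p
  proof -
    have "(\<Sum>i\<in>{0..<r}. t (p i)) \<le> (\<Sum>i\<in>{0..<r}. (t (p i) - i) + i)" by (rule sum_mono) simp
    then have "(\<Sum>j<r. t j) \<le> D p + (\<Sum>i<r. i)"
      using sumt[OF that] unfolding D_def by (simp add: sum.distrib atLeast0LessThan)
    then show ?thesis unfolding K_def by simp
  qed
  define Q where "Q = (\<Sum>p\<in>P. signof p * (monom 1 (D p - K) * (\<Prod>i\<in>{0..<r}. Qf i (p i))))"
  have "wronskian gs = (\<Sum>p\<in>P. signof p * (\<Prod>i\<in>{0..<r}. E i (p i)))"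
    unfolding wr_WM P_def using WM_carrier[of gs] len
    by (subst det_def'[of _ r]) (auto simp: WM_def E_def intro!: sum.cong prod.cong dest: permutes_in_image)
  also have "\<dots> = (\<Sum>p\<in>P. signof p * (monom 1 (D p) * (\<Prod>i\<in>{0..<r}. Qf i (p i))))"
  proof (rule sum.cong, simp)
    fix p assume p: "p \<in> P"
    have "(\<Prod>i\<in>{0..<r}. E i (p i)) = (\<Prod>i\<in>{0..<r}. monom 1 (t (p i) - i) * Qf i (p i))"
      by (rule prod.cong) (use EQ pr[OF p] in auto)
    also have "\<dots> = monom 1 (D p) * (\<Prod>i\<in>{0..<r}. Qf i (p i))"
      unfolding prod.distrib D_def by (simp add: prod_monom)
    finally show "signof p * (\<Prod>i\<in>{0..<r}. E i (p i)) = signof p * (monom 1 (D p) * (\<Prod>i\<in>{0..<r}. Qf i (p i)))"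
      by simp
  qed
  also have "\<dots> = monom 1 K * Q"
    unfolding Q_def sum_distrib_left
  proof (rule sum.cong, simp)
    fix p assume p: "p \<in> P"
    have "monom 1 (D p) = monom 1 K * (monom (1::rat) (D p - K))"
      using DK[OF p] by (simp add: mult_monom)
    then show "signof p * (monom 1 (D p) * (\<Prod>i\<in>{0..<r}. Qf i (p i))) =
       monom 1 K * (signof p * (monom 1 (D p - K) * (\<Prod>i\<in>{0..<r}. Qf i (p i))))"
      by (simp add: algebra_simps)
  qed
  finally have W: "wronskian gs = monom 1 K * Q" .
  have "poly Q 0 = (\<Sum>p\<in>P. signof p * (\<Prod>i\<in>{0..<r}. ff (t (p i)) i))"
    unfolding Q_def poly_sum
  proof (rule sum.cong, simp)
    fix p assume p: "p \<in> P"
    have "poly (monom 1 (D p - K)) 0 * (\<Prod>i\<in>{0..<r}. poly (Qf i (p i)) 0) = (\<Prod>i\<in>{0..<r}. ff (t (p i)) i)"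
    proof (cases "\<forall>i<r. i \<le> t (p i)")
      case True
      have "(\<Sum>i\<in>{0..<r}. t (p i)) = (\<Sum>i\<in>{0..<r}. (t (p i) - i) + i)"
        by (rule sum.cong) (use True in auto)
      then have "(\<Sum>j<r. t j) = D p + (\<Sum>i<r. i)"
        using sumt[OF p] unfolding D_def by (simp add: sum.distrib atLeast0LessThan)
      then have "D p = K" unfolding K_def by simp
      moreover have "(\<Prod>i\<in>{0..<r}. poly (Qf i (p i)) 0) = (\<Prod>i\<in>{0..<r}. ff (t (p i)) i)"
        by (rule prod.cong) (use True Qf0 pr[OF p] in auto)
      ultimately show ?thesis by (simp add: poly_monom)
    next
      case False
      then obtain i0 where i0: "i0 < r" "t (p i0) < i0" by auto
      have "(\<Prod>i\<in>{0..<r}. ff (t (p i)) i) = 0"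
        by (rule prod_zero) (use i0 ff_zero in force)+
      moreover have "(\<Sum>i\<in>{0..<r}. t (p i)) < (\<Sum>i\<in>{0..<r}. (t (p i) - i) + i)"
        by (rule sum_strict_mono_ex1) (use i0 in \<open>auto intro!: bexI[of _ i0]\<close>)
      then have "(\<Sum>j<r. t j) < D p + (\<Sum>i<r. i)"
        using sumt[OF p] unfolding D_def by (simp add: sum.distrib atLeast0LessThan)
      then have "D p - K \<noteq> 0" unfolding K_def using st by simp
      then have "poly (monom (1::rat) (D p - K)) 0 = 0" by (simp add: poly_monom)
      ultimately show ?thesis by simp
    qed
    then show "poly (signof p * (monom 1 (D p - K) * (\<Prod>i\<in>{0..<r}. Qf i (p i)))) 0 =
       signof p * (\<Prod>i\<in>{0..<r}. ff (t (p i)) i)"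
      by (simp add: poly_prod)
  qed
  also have "\<dots> = det (mat r r (\<lambda>(i,j). ff (t j) i))"
    unfolding P_def
    by (subst det_def'[of _ r]) (auto intro!: sum.cong prod.cong dest: permutes_in_image)
  finally show ?thesis using W K_def by blast
qed


lemma pderiv_pow_sum: "(pderiv ^^ i) (sum f A) = (\<Sum>x\<in>A. (pderiv ^^ i) (f x))"
  by (induction i) (auto simp: pderiv_sum)

lemma pderiv_pow_smult: "(pderiv ^^ i) (smult a p) = smult a ((pderiv ^^ i) p)"
  by (induction i) (auto simp: pderiv_smult)

interpretation const_hom: comm_ring_hom "\<lambda>a::rat. [:a:]"
  by unfold_locales (simp_all add: one_pCons)

lemma wronskian_lincomb:
  assumes len: "length fs = r"
  shows "wronskian (map (\<lambda>j. \<Sum>k<r. smult (C k j) (fs!k)) [0..<r])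
       = smult (det (mat r r (\<lambda>(k,j). C k j))) (wronskian fs)"
proof -
  let ?gs = "map (\<lambda>j. \<Sum>k<r. smult (C k j) (fs!k)) [0..<r]"
  let ?C = "mat r r (\<lambda>(k,j). C k j)"
  let ?B = "map_mat (\<lambda>a. [:a:]) ?C"
  have "WM ?gs = WM fs * ?B"
  proof (rule eq_matI)
    fix i j assume ij: "i < dim_row (WM fs * ?B)" "j < dim_col (WM fs * ?B)"
    then have i: "i < r" and j: "j < r" using len by (auto simp: WM_def)
    have "(WM fs * ?B) $$ (i,j) = (\<Sum>k<r. (pderiv ^^ i) (fs!k) * [:C k j:])"
      using i j len by (simp add: WM_def scalar_prod_def Matrix.row_def Matrix.col_def lessThan_atLeast0)
    also have "\<dots> = (pderiv ^^ i) (\<Sum>k<r. smult (C k j) (fs!k))"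
      unfolding pderiv_pow_sum pderiv_pow_smult by (rule sum.cong) (auto simp: mult.commute)
    also have "\<dots> = WM ?gs $$ (i,j)" using i j by (simp add: WM_def)
    finally show "WM ?gs $$ (i,j) = (WM fs * ?B) $$ (i,j)" by simp
  qed (use len in \<open>auto simp: WM_def\<close>)
  then have "wronskian ?gs = det (WM fs) * det ?B"
    unfolding wr_WM using det_mult[of "WM fs" r ?B] len by (auto simp: WM_def)
  also have "det ?B = [:det ?C:]" by simp
  finally show ?thesis by (simp add: wr_WM mult.commute)
qed


lemma sum_nth_distinct: "distinct xs \<Longrightarrow> (\<Sum>k<length xs. f (xs!k)) = (\<Sum>n\<in>set xs. f n)"
proof -
  assume d: "distinct xs"
  have s: "set xs = (\<lambda>k. xs!k) ` {..<length xs}" by (auto simp: set_conv_nth)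
  have "inj_on (\<lambda>k. xs!k) {..<length xs}" using d by (auto simp: inj_on_def nth_eq_iff_index_eq)
  then show ?thesis unfolding s by (simp add: sum.reindex)
qed

lemma class_inverse:
  assumes fin: "finite S" and par: "\<forall>n\<in>S. n mod 2 = q"
  defines "m \<equiv> card S" and "sl \<equiv> sorted_list_of_set S"
  shows "\<exists>G. \<forall>i<m. \<forall>i'<m. (\<Sum>k<m. coeff (herm (sl!k)) (2*i'+q) * G (k,i)) = (if i' = i then 1 else 0)"
proof -
  define A where "A = mat m m (\<lambda>(i,k). coeff (herm (sl!k)) (2*i+q))"
  have Ac: "A \<in> carrier_mat m m" unfolding A_def by simp
  have sl: "distinct sl" "set sl = S" "length sl = m" using fin unfolding sl_def m_def by auto
  have "det A \<noteq> 0"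
  proof
    assume "det A = 0"
    then obtain v where v: "v \<in> carrier_vec m" "v \<noteq> 0\<^sub>v m" "A *\<^sub>v v = 0\<^sub>v m"
      using det_0_iff_vec_prod_zero_field[OF Ac] by auto
    define \<phi> where "\<phi> k = sl ! k" for k
    have injp: "inj_on \<phi> {..<m}" unfolding \<phi>_def using sl by (auto simp: inj_on_def nth_eq_iff_index_eq)
    have imp: "\<phi> ` {..<m} = S" unfolding \<phi>_def using sl by (auto simp: set_conv_nth)
    define c where "c n = v $ (the_inv_into {..<m} \<phi> n)" for n
    have cphi: "c (\<phi> k) = v $ k" if "k < m" for k
      unfolding c_def using the_inv_into_f_f[OF injp] that by simp
    define P where "P = (\<Sum>n\<in>S. smult (c n) (herm n))"
    have "P = (\<Sum>k<m. smult (c (\<phi> k)) (herm (\<phi> k)))"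
      unfolding P_def imp[symmetric] using sum.reindex[OF injp] by (simp add: comp_def)
    also have "\<dots> = (\<Sum>k<m. smult (v $ k) (herm (\<phi> k)))"
      by (rule sum.cong) (use cphi in auto)
    also have "\<dots> = (\<Sum>k<m. smult (v $ k) (herm (sl!k)))" unfolding \<phi>_def ..
    finally have P2: "P = (\<Sum>k<m. smult (v $ k) (herm (sl!k)))" .
    have "monom 1 (2 * m + q) dvd P"
      unfolding monom_1_dvd_iff'
    proof (intro allI impI)
      fix s assume s: "s < 2 * m + q"
      show "coeff P s = 0"
      proof (cases "s mod 2 = q")
        case True
        then obtain i where i: "s = 2*i + q" by (metis mult_div_mod_eq)
        have "q < 2" using True by simp
        then have im: "i < m" using s i by simp
        have "coeff P s = (\<Sum>k<m. v $ k * coeff (herm (sl!k)) (2*i+q))"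
          unfolding P2 i by (simp add: coeff_sum)
        also have "\<dots> = (A *\<^sub>v v) $ i" using im v(1) Ac
          by (simp add: A_def scalar_prod_def Matrix.row_def lessThan_atLeast0 mult.commute)
        also have "\<dots> = 0" using v(3) im by simp
        finally show ?thesis .
      next
        case False
        have "coeff P s = (\<Sum>n\<in>S. c n * coeff (herm n) s)" unfolding P_def by (simp add: coeff_sum)
        also have "\<dots> = 0"
        proof (rule sum.neutral, intro ballI)
          fix n assume "n \<in> S"
          then have "odd (n + s)" using par False by (auto elim!: oddE evenE simp: mod2_eq_if split: if_splits) 
          then show "c n * coeff (herm n) s = 0" using herm_parity by simp
        qed
        finally show ?thesis .
      qed
    qed
    then have "\<forall>n\<in>S. c n = 0" using kernel_lemma[OF fin par] unfolding m_def P_def by blast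
    then have "\<forall>k<m. v $ k = 0" using cphi imp by auto
    then have "v = 0\<^sub>v m" using v(1) by (intro eq_vecI) auto
    with v(2) show False by simp
  qed
  define G where "G = (1 / det A) \<cdot>\<^sub>m adj_mat A"
  have AG: "A * G = 1\<^sub>m m"
  proof -
    have "A * G = (1 / det A) \<cdot>\<^sub>m (A * adj_mat A)"
      unfolding G_def using Ac adj_mat(1)[OF Ac] by (simp add: mult_smult_distrib)
    also have "\<dots> = 1\<^sub>m m" using adj_mat(2)[OF Ac] `det A \<noteq> 0` by (simp, intro eq_matI) auto
    finally show ?thesis .
  qed
  have Gc: "G \<in> carrier_mat m m" unfolding G_def using adj_mat(1)[OF Ac] by simp
  show ?thesis
  proof (intro exI allI impI)
    fix i i' assume i: "i < m" and i': "i' < m"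
    have "(A * G) $$ (i', i) = (\<Sum>k<m. coeff (herm (sl!k)) (2*i'+q) * G $$ (k,i))"
      using i i' Ac Gc by (simp add: A_def scalar_prod_def Matrix.row_def Matrix.col_def lessThan_atLeast0)
    then show "(\<Sum>k<m. coeff (herm (sl!k)) (2*i'+q) * G $$ (k,i)) = (if i' = i then 1 else 0)"
      using AG i i' by simp
  qed
qed


lemma sum_t: "(\<Sum>j<a+(b::nat). (if j < a then 2*j else 2*(j-a)+1)) = a*(a-1) + b*b"
proof (induction b)
  case 0
  have "(\<Sum>j<a. 2*j) = a*(a-1)" by (induction a) (auto simp: algebra_simps)
  then show ?case by simp
next
  case (Suc b)
  then show ?case by (simp add: algebra_simps)
qed

theorem herm_order:
  assumes d: "distinct ns"
  defines "r \<equiv> length ns"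
    and "m0 \<equiv> card {n\<in>set ns. n mod 2 = 0}" and "m1 \<equiv> card {n\<in>set ns. n mod 2 = 1}"
  shows "\<exists>Q. wronskian (map herm ns) = monom 1 (m0*(m0-1) + m1*m1 - (\<Sum>i<r. i)) * Q \<and> poly Q 0 \<noteq> 0"
proof -
  define S where "S q = {n\<in>set ns. n mod 2 = q}" for q :: nat
  define m where "m q = card (S q)" for q
  define sl where "sl q = sorted_list_of_set (S q)" for q
  have finS: "finite (S q)" for q unfolding S_def by simp
  have parS: "\<forall>n\<in>S q. n mod 2 = q" for q unfolding S_def by simp
  have sl: "distinct (sl q)" "set (sl q) = S q" "length (sl q) = m q" for q
    using finS unfolding sl_def m_def by auto
  have "\<forall>q. \<exists>G. \<forall>i<m q. \<forall>i'<m q. (\<Sum>k<m q. coeff (herm (sl q!k)) (2*i'+q) * G (k,i)) = (if i' = i then 1 else 0)"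
    using class_inverse[OF finS parS] unfolding m_def sl_def by blast
  then obtain G where G: "\<And>q i i'. i < m q \<Longrightarrow> i' < m q \<Longrightarrow>
      (\<Sum>k<m q. coeff (herm (sl q!k)) (2*i'+q) * G q (k,i)) = (if i' = i then 1 else 0)"
    by metis
  have m01: "m 0 = m0" "m 1 = m1" unfolding m_def m0_def m1_def S_def by auto
  have mr: "m 0 + m 1 = r"
  proof -
    have "set ns = S 0 \<union> S 1" unfolding S_def by auto
    moreover have "S 0 \<inter> S 1 = {}" unfolding S_def by auto
    ultimately have "card (set ns) = m 0 + m 1" unfolding m_def using finS by (simp add: card_Un_disjoint)
    then show ?thesis using d unfolding r_def by (simp add: distinct_card)
  qed
  define pq where "pq j = (if j < m 0 then 0 else 1::nat)" for j
  define ix where "ix j = (if j < m 0 then j else j - m 0)" for j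
  define t where "t j = 2 * ix j + pq j" for j
  have ixm: "ix j < m (pq j)" if "j < r" for j using that mr unfolding ix_def pq_def by auto
  have pq2: "pq j < 2" for j unfolding pq_def by simp
  define \<phi> where "\<phi> q k = sl q ! k" for q k
  have injp: "inj_on (\<phi> q) {..<m q}" for q unfolding \<phi>_def using sl by (auto simp: inj_on_def nth_eq_iff_index_eq)
  have imp: "\<phi> q ` {..<m q} = S q" for q
  proof -
    have "set (sl q) = (\<lambda>k. sl q ! k) ` {..<length (sl q)}" by (auto simp: set_conv_nth)
    then show ?thesis unfolding \<phi>_def using sl(2,3)[of q] by simp
  qed
  define cf where "cf j n = (if n mod 2 = pq j then G (pq j) (the_inv_into {..<m (pq j)} (\<phi> (pq j)) n, ix j) else 0)" for j n
  define C where "C k j = cf j (ns ! k)" for k j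
  define gs where "gs = map (\<lambda>j. \<Sum>k<r. smult (C k j) (map herm ns ! k)) [0..<r]"
  have coeff_g: "coeff (gs!j) s = (\<Sum>k<m (pq j). coeff (herm (sl (pq j) ! k)) s * G (pq j) (k, ix j))"
    if j: "j < r" for j s
  proof -
    let ?q = "pq j"
    have "coeff (gs!j) s = (\<Sum>k<r. cf j (ns!k) * coeff (herm (ns!k)) s)"
      unfolding gs_def C_def using j by (simp add: coeff_sum r_def)
    also have "\<dots> = (\<Sum>n\<in>set ns. cf j n * coeff (herm n) s)"
      unfolding r_def by (rule sum_nth_distinct[OF d])
    also have "\<dots> = (\<Sum>n\<in>S ?q. cf j n * coeff (herm n) s)"
      by (rule sum.mono_neutral_right) (auto simp: S_def cf_def)
    also have "\<dots> = (\<Sum>k<m ?q. cf j (\<phi> ?q k) * coeff (herm (\<phi> ?q k)) s)"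
      unfolding imp[symmetric] using sum.reindex[OF injp] by (simp add: comp_def)
    also have "\<dots> = (\<Sum>k<m ?q. coeff (herm (sl ?q ! k)) s * G ?q (k, ix j))"
    proof (rule sum.cong, simp)
      fix k assume k: "k \<in> {..<m ?q}"
      have "\<phi> ?q k \<in> S ?q" using imp k by blast
      then have "\<phi> ?q k mod 2 = ?q" using parS by blast
      then show "cf j (\<phi> ?q k) * coeff (herm (\<phi> ?q k)) s = coeff (herm (sl ?q ! k)) s * G ?q (k, ix j)"
        unfolding cf_def using the_inv_into_f_f[OF injp] k by (simp add: \<phi>_def)
    qed
    finally show ?thesis .
  qed
  have gz: "coeff (gs!j) s = 0" if j: "j < r" and s: "s < t j" for j s
  proof (cases "s mod 2 = pq j")
    case True
    then obtain i where i: "s = 2*i + pq j" by (metis mult_div_mod_eq)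
    then have "i < ix j" using s unfolding t_def by simp
    then show ?thesis using coeff_g[OF j] G[of "ix j" "pq j" i] ixm[OF j] i by simp
  next
    case False
    show ?thesis unfolding coeff_g[OF j]
    proof (rule sum.neutral, intro ballI)
      fix k assume k: "k \<in> {..<m (pq j)}"
      have "sl (pq j) ! k \<in> S (pq j)" using k sl(2,3)[of "pq j"] nth_mem by (metis lessThan_iff)
      then have "sl (pq j) ! k mod 2 = pq j" using parS by blast
      then have "odd (sl (pq j) ! k + s)" using False pq2[of j]
        by (auto simp: mod2_eq_if split: if_splits) 
      then show "coeff (herm (sl (pq j) ! k)) s * G (pq j) (k, ix j) = 0" using herm_parity by simp
    qed
  qed
  have go: "coeff (gs!j) (t j) = 1" if j: "j < r" for j
    using coeff_g[OF j] G[of "ix j" "pq j" "ix j"] ixm[OF j] unfolding t_def by simp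
  have injt: "inj_on t {..<r}"
  proof (rule inj_onI)
    fix j j' assume "j \<in> {..<r}" "j' \<in> {..<r}" "t j = t j'"
    then have "pq j = pq j'" "ix j = ix j'" using pq2[of j] pq2[of j'] unfolding t_def by presburger+
    then show "j = j'" unfolding pq_def ix_def by (auto split: if_splits)
  qed
  have lg: "length gs = r" unfolding gs_def by simp
  obtain Q where Q: "wronskian gs = monom 1 ((\<Sum>j<r. t j) - (\<Sum>i<r. i)) * Q"
      "poly Q 0 = det (mat r r (\<lambda>(i,j). ff (t j) i))"
    using wronskian_val[OF lg injt] gz go by blast
  have sumt: "(\<Sum>j<r. t j) = m0*(m0-1) + m1*m1"
  proof -
    have "(\<Sum>j<r. t j) = (\<Sum>j<m 0 + m 1. (if j < m 0 then 2*j else 2*(j - m 0)+1))"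
      unfolding mr t_def ix_def pq_def by (rule sum.cong) auto
    then show ?thesis using sum_t[of "m 0" "m 1"] m01 by simp
  qed
  define K where "K = m0*(m0-1) + m1*m1 - (\<Sum>i<r. i)"
  have Q0: "poly Q 0 \<noteq> 0" using Q(2) ff_det_nonzero[OF injt] by simp
  have wl: "wronskian gs = smult (det (mat r r (\<lambda>(k,j). C k j))) (wronskian (map herm ns))"
    unfolding gs_def by (rule wronskian_lincomb) (simp add: r_def)
  define dC where "dC = det (mat r r (\<lambda>(k,j). C k j))"
  have "Q \<noteq> 0" using Q0 by auto
  then have "wronskian gs \<noteq> 0" using Q(1) by (simp add: monom_eq_0_iff)
  then have dC: "dC \<noteq> 0" using wl dC_def by auto
  have "wronskian (map herm ns) = smult (1/dC) (wronskian gs)" using wl dC dC_def by simp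
  also have "\<dots> = monom 1 K * smult (1/dC) Q" using Q(1) sumt K_def by simp
  finally show ?thesis using Q0 dC K_def by (intro exI[of _ "smult (1/dC) Q"]) simp
qed


definition pc :: "nat \<Rightarrow> nat set \<Rightarrow> nat" where
  "pc q N = card {n\<in>N. n mod 2 = q}"

lemma remove_props:
  assumes "remove_2hook N M" "finite N"
  shows "finite M \<and> card M = card N \<and> (\<forall>q. pc q M = pc q N) \<and> \<Sum>M + 2 = \<Sum>N"
proof -
  obtain a where a: "a \<in> N" "2 \<le> a" "a - 2 \<notin> N" "M = insert (a - 2) (N - {a})"
    using assms(1) unfolding remove_2hook_def by blast
  have fin: "finite M" using a assms(2) by simp
  have c: "card M = card N"
  proof -
    have "card (N - {a}) = card N - 1" using a assms(2) by (simp add: card_Diff_singleton)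
    moreover have "card N > 0" using a assms(2) card_gt_0_iff by blast
    moreover have "a - 2 \<notin> N - {a}" using a by simp
    ultimately show ?thesis using a assms(2) by simp
  qed
  have p: "pc q M = pc q N" for q
  proof (cases "a mod 2 = q")
    case True
    have "(a - 2) mod 2 = q" using True a(2) by (metis le_add_diff_inverse2 mod_add_self2)
    then have "{n\<in>M. n mod 2 = q} = insert (a - 2) ({n\<in>N. n mod 2 = q} - {a})"
      using a True by auto
    moreover have "a \<in> {n\<in>N. n mod 2 = q}" "a - 2 \<notin> {n\<in>N. n mod 2 = q} - {a}" using a True by auto
    moreover have "finite {n\<in>N. n mod 2 = q}" using assms(2) by simp
    moreover have "card {n\<in>N. n mod 2 = q} > 0" using calculation(2,4) card_gt_0_iff by blast
    ultimately show ?thesis unfolding pc_def by (simp add: card_Diff_singleton)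
  next
    case False
    have "(a - 2) mod 2 \<noteq> q" using False a(2) by (metis le_add_diff_inverse2 mod_add_self2)
    then have "{n\<in>M. n mod 2 = q} = {n\<in>N. n mod 2 = q}" using a False by auto
    then show ?thesis unfolding pc_def by simp
  qed
  have "\<Sum>M = (a - 2) + \<Sum>(N - {a})" using a assms(2) by simp
  moreover have "\<Sum>N = a + \<Sum>(N - {a})" using a assms(2) by (simp add: sum.remove)
  ultimately have "\<Sum>M + 2 = \<Sum>N" using a(2) by simp
  then show ?thesis using fin c p by blast
qed

lemma rtrancl_props:
  assumes "remove_2hook\<^sup>*\<^sup>* N M" "finite N"
  shows "finite M \<and> card M = card N \<and> (\<forall>q. pc q M = pc q N)"
  using assms
proof (induction rule: rtranclp_induct)
  case base then show ?case by simp
next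
  case (step y z)
  then show ?case using remove_props[of y z] by auto
qed

lemma core_exists:
  "finite N \<Longrightarrow> \<exists>M. remove_2hook\<^sup>*\<^sup>* N M \<and> (\<nexists>M'. remove_2hook M M')"
proof (induction "\<Sum>N" arbitrary: N rule: less_induct)
  case less
  show ?case
  proof (cases "\<exists>M'. remove_2hook N M'")
    case False then show ?thesis by blast
  next
    case True
    then obtain M' where M': "remove_2hook N M'" by blast
    then have "finite M'" "\<Sum>M' < \<Sum>N" using remove_props[OF M' less(2)] by auto
    then obtain M where "remove_2hook\<^sup>*\<^sup>* M' M" "\<nexists>M''. remove_2hook M M''"
      using less(1) by blast
    then show ?thesis using M' by (meson converse_rtranclp_into_rtranclp)
  qed
qed

lemma down_closed:
  assumes "finite (E :: nat set)" "\<forall>i. Suc i \<in> E \<longrightarrow> i \<in> E"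
  shows "E = {..<card E}"
proof (cases "E = {}")
  case True then show ?thesis by simp
next
  case False
  define M where "M = Max E"
  have ME: "M \<in> E" using False assms M_def by simp
  have "\<forall>k. M - k \<in> E"
  proof
    fix k show "M - k \<in> E"
    proof (induction k)
      case 0 then show ?case using ME by simp
    next
      case (Suc k)
      then show ?case using assms(2)
        by (cases "M - k") (auto simp: diff_Suc split: nat.splits)
    qed
  qed
  then have "{..M} \<subseteq> E" by (metis atMost_iff diff_diff_cancel subsetI)
  moreover have "E \<subseteq> {..M}" using assms M_def by auto
  ultimately have "E = {..M}" by blast
  then show ?thesis by (simp add: lessThan_Suc_atMost)
qed

lemma sum_even: "(\<Sum>i<a. 2*i) = a * (a - 1::nat)"
  by (induction a) (auto simp: algebra_simps)

lemma sum_odd: "(\<Sum>i<b. 2*i+1) = b * (b::nat)"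
  by (induction b) (auto simp: algebra_simps)

lemma terminal_sum:
  assumes fin: "finite M" and tm: "\<nexists>M'. remove_2hook M M'"
  shows "\<Sum>M = pc 0 M * (pc 0 M - 1) + pc 1 M * pc 1 M"
proof -
  have cl: "\<forall>a\<in>M. 2 \<le> a \<longrightarrow> a - 2 \<in> M"
    using tm unfolding remove_2hook_def by blast
  define E where "E q = {i. 2*i + q \<in> M}" for q
  have img: "{n\<in>M. n mod 2 = q} = (\<lambda>i. 2*i+q) ` E q" if "q < 2" for q
  proof
    show "{n\<in>M. n mod 2 = q} \<subseteq> (\<lambda>i. 2*i+q) ` E q"
    proof
      fix n assume "n \<in> {n\<in>M. n mod 2 = q}"
      then have "n = 2*(n div 2) + q" "n \<in> M" by auto
      then show "n \<in> (\<lambda>i. 2*i+q) ` E q" unfolding E_def by (metis (mono_tags) image_eqI mem_Collect_eq)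
    qed
    show "(\<lambda>i. 2*i+q) ` E q \<subseteq> {n\<in>M. n mod 2 = q}" unfolding E_def using that by auto
  qed
  have inj: "inj (\<lambda>i. 2*i+(q::nat))" for q by (auto simp: inj_on_def)
  have finE: "finite (E q)" for q
  proof -
    have "E q \<subseteq> (\<lambda>i. 2*i+q) -` M" unfolding E_def by auto
    then show ?thesis using finite_vimageI[OF fin inj] finite_subset by blast
  qed
  have cE: "card (E q) = pc q M" if "q < 2" for q
    unfolding pc_def img[OF that] using inj by (simp add: card_image inj_on_def)
  have dE: "E q = {..<pc q M}" if "q < 2" for q
  proof -
    have "\<forall>i. Suc i \<in> E q \<longrightarrow> i \<in> E q"
    proof (intro allI impI)
      fix i assume "Suc i \<in> E q"
      then have "2*i + q + 2 \<in> M" unfolding E_def by (simp add: algebra_simps)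
      then have "2*i + q \<in> M" using cl by force
      then show "i \<in> E q" unfolding E_def by simp
    qed
    then show ?thesis using down_closed[OF finE[of q]] cE[OF that] by simp
  qed
  have "M = {n\<in>M. n mod 2 = 0} \<union> {n\<in>M. n mod 2 = 1}" by auto
  then have "\<Sum>M = \<Sum>{n\<in>M. n mod 2 = 0} + \<Sum>{n\<in>M. n mod 2 = 1}"
    using fin by (subst sum.union_disjoint[symmetric]) auto
  also have "\<Sum>{n\<in>M. n mod 2 = 0} = (\<Sum>i<pc 0 M. 2*i)"
    using img[of 0] dE[of 0] by (simp add: sum.reindex inj_on_def)
  also have "\<Sum>{n\<in>M. n mod 2 = 1} = (\<Sum>i<pc 1 M. 2*i+1)"
    using img[of 1] dE[of 1] by (simp add: sum.reindex inj_on_def)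
  also have "(\<Sum>i<pc 0 M. 2*i) = pc 0 M * (pc 0 M - 1)" by (rule sum_even)
  also have "(\<Sum>i<pc 1 M. 2*i+1) = pc 1 M * pc 1 M" by (rule sum_odd)
  finally show ?thesis .
qed
 
lemma core_size:
  assumes "finite N"
  shows "part_size (two_core N) = pc 0 N * (pc 0 N - 1) + pc 1 N * pc 1 N - card N * (card N - 1) div 2"
proof -
  have ex: "\<exists>M. remove_2hook\<^sup>*\<^sup>* N M \<and> (\<nexists>M'. remove_2hook M M')" using core_exists[OF assms] .
  define M where "M = two_core N"
  have M: "remove_2hook\<^sup>*\<^sup>* N M" "\<nexists>M'. remove_2hook M M'"
    using someI_ex[OF ex] unfolding M_def two_core_def by blast+
  have p: "finite M" "card M = card N" "pc 0 M = pc 0 N" "pc 1 M = pc 1 N"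
    using rtrancl_props[OF M(1) assms] by auto
  show ?thesis using terminal_sum[OF p(1) M(2)] p unfolding part_size_def M_def[symmetric] by simp
qed

lemma gauss_lt: "(\<Sum>i<r. i) = r * (r - 1) div (2::nat)"
proof -
  have "2 * (\<Sum>i<r. i) = r * (r - 1)" by (induction r) (auto simp: algebra_simps)
  then show ?thesis by simp
qed


lemma pderiv_of_int: "pderiv (of_int k :: rat poly) = 0"
  by (simp only: of_int_poly) (simp add: pderiv_pCons)

lemma pderiv_signof_mult: "pderiv (signof p * (q :: rat poly)) = signof p * pderiv q"
  by (simp add: pderiv_mult pderiv_of_int)

lemma pderiv_det:
  fixes A :: "rat poly mat"
  assumes A: "A \<in> carrier_mat n n"
  shows "pderiv (det A) = (\<Sum>i0<n. det (mat n n (\<lambda>(i,j). if i = i0 then pderiv (A$$(i,j)) else A$$(i,j))))"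
proof -
  define P where "P = {p. p permutes {0..<n}}"
  define B where "B i0 = mat n n (\<lambda>(i,j). if i = i0 then pderiv (A$$(i,j)) else A$$(i,j))" for i0
  have pn: "p i < n" if "p \<in> P" "i < n" for p i
    using that unfolding P_def by (simp add: permutes_in_image)
  have "pderiv (det A) = (\<Sum>p\<in>P. signof p * pderiv (\<Prod>i\<in>{0..<n}. A $$ (i, p i)))"
    unfolding det_def'[OF A] P_def pderiv_sum by (simp only: pderiv_signof_mult)
  also have "\<dots> = (\<Sum>p\<in>P. \<Sum>i0<n. signof p * (\<Prod>i\<in>{0..<n}. B i0 $$ (i, p i)))"
  proof (rule sum.cong, simp)
    fix p assume p: "p \<in> P"
    have "pderiv (\<Prod>i\<in>{0..<n}. A $$ (i, p i)) = (\<Sum>i0\<in>{0..<n}. (\<Prod>i\<in>{0..<n} - {i0}. A $$ (i, p i)) * pderiv (A $$ (i0, p i0)))"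
      by (rule pderiv_prod)
    also have "\<dots> = (\<Sum>i0<n. (\<Prod>i\<in>{0..<n}. B i0 $$ (i, p i)))"
    proof (rule sum.cong, simp add: atLeast0LessThan)
      fix i0 assume i0: "i0 \<in> {..<n}"
      have "(\<Prod>i\<in>{0..<n}. B i0 $$ (i, p i)) = B i0 $$ (i0, p i0) * (\<Prod>i\<in>{0..<n} - {i0}. B i0 $$ (i, p i))"
        using i0 by (subst prod.remove[of _ i0]) auto
      also have "\<dots> = pderiv (A $$ (i0, p i0)) * (\<Prod>i\<in>{0..<n} - {i0}. A $$ (i, p i))"
        using i0 pn[OF p] by (auto simp: B_def intro!: prod.cong)
      finally show "(\<Prod>i\<in>{0..<n} - {i0}. A $$ (i, p i)) * pderiv (A $$ (i0, p i0)) = (\<Prod>i\<in>{0..<n}. B i0 $$ (i, p i))"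
        by (simp add: mult.commute)
    qed
    finally show "signof p * pderiv (\<Prod>i\<in>{0..<n}. A $$ (i, p i)) = (\<Sum>i0<n. signof p * (\<Prod>i\<in>{0..<n}. B i0 $$ (i, p i)))"
      by (simp add: sum_distrib_left)
  qed
  also have "\<dots> = (\<Sum>i0<n. \<Sum>p\<in>P. signof p * (\<Prod>i\<in>{0..<n}. B i0 $$ (i, p i)))"
    by (rule sum.swap)
  also have "\<dots> = (\<Sum>i0<n. det (B i0))"
    unfolding P_def by (rule sum.cong, simp, subst det_def'[of _ n]) (auto simp: B_def)
  finally show ?thesis unfolding B_def .
qed

definition WD :: "rat poly list \<Rightarrow> rat poly mat" where
  "WD L = mat (length L) (length L) (\<lambda>(i,j). (pderiv ^^ (if i = length L - 1 then length L else i)) (L!j))"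

lemma wronskian_deriv:
  assumes "L \<noteq> []"
  shows "pderiv (wronskian L) = det (WD L)"
proof -
  define k where "k = length L"
  have k0: "k = Suc (k - 1)" using assms k_def by simp
  have pd: "pderiv ((pderiv ^^ (k-1)) p) = (pderiv ^^ k) p" for p
    by (subst (2) k0) simp
  define B where "B i0 = mat k k (\<lambda>(i,j). if i = i0 then pderiv (WM L $$ (i,j)) else WM L $$ (i,j))" for i0
  have "pderiv (wronskian L) = (\<Sum>i0<k. det (B i0))"
    unfolding wr_WM B_def k_def by (rule pderiv_det[OF WM_carrier])
  also have "\<dots> = (\<Sum>i0<k-1. det (B i0)) + det (B (k-1))"
    by (subst k0) (simp only: sum.lessThan_Suc)
  also have "(\<Sum>i0<k-1. det (B i0)) = 0"
  proof (rule sum.neutral, intro ballI)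
    fix i0 assume i0: "i0 \<in> {..<k-1}"
    show "det (B i0) = 0"
    proof (rule det_identical_rows[of _ k i0 "Suc i0"])
      show "B i0 \<in> carrier_mat k k" unfolding B_def by simp
      show "row (B i0) i0 = row (B i0) (Suc i0)"
        using i0 by (intro eq_vecI) (auto simp: B_def WM_def k_def)
    qed (use i0 in auto)
  qed
  also have "B (k-1) = WD L"
    by (rule eq_matI) (use pd in \<open>auto simp: B_def WM_def WD_def k_def\<close>)
  finally show ?thesis by simp
qed


lemma det1: "(C :: 'a :: comm_ring_1 mat) \<in> carrier_mat 1 1 \<Longrightarrow> det C = C $$ (0,0)"
  by (subst det_upper_triangular[of C 1]) (auto simp: upper_triangular_def diag_mat_def)

lemma det2:
  assumes B: "(B :: 'a :: comm_ring_1 mat) \<in> carrier_mat 2 2"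
  shows "det B = B$$(0,0) * B$$(1,1) - B$$(0,1) * B$$(1,0)"
proof -
  have "det B = (\<Sum>i<2. B $$ (i,0) * cofactor B i 0)"
    using laplace_expansion_column[OF B, of 0] by simp
  also have "\<dots> = B $$ (0,0) * cofactor B 0 0 + B $$ (1,0) * cofactor B 1 0"
    by (simp add: numeral_2_eq_2)
  also have "cofactor B 0 0 = B $$ (1,1)"
    unfolding cofactor_def using B by (subst det1) (auto simp: mat_delete_def)
  also have "cofactor B 1 0 = - B $$ (0,1)"
    unfolding cofactor_def using B by (subst det1) (auto simp: mat_delete_def)
  finally show ?thesis by (simp add: algebra_simps)
qed

lemma desnanot:
  fixes A :: "'a :: idom mat"
  assumes A: "A \<in> carrier_mat (m+2) (m+2)" and d: "det A \<noteq> 0"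
  shows "cofactor A m m * cofactor A (Suc m) (Suc m) - cofactor A m (Suc m) * cofactor A (Suc m) m
       = det A * det (mat m m (\<lambda>(i,j). A $$ (i,j)))"
proof -
  define n where "n = m + 2"
  define adj where "adj = adj_mat A"
  have adjc: "adj \<in> carrier_mat n n" unfolding adj_def n_def using adj_mat(1)[OF A] .
  have Aadj: "A * adj = det A \<cdot>\<^sub>m 1\<^sub>m n" unfolding adj_def n_def using adj_mat(2)[OF A] .
  define X where "X = mat n n (\<lambda>(i,j). if j < m then (if i = j then 1 else 0) else adj $$ (i,j))"
  define Y where "Y = mat n n (\<lambda>(i,j). if j < m then A $$ (i,j) else (if i = j then det A else 0))"
  have Xc: "X \<in> carrier_mat n n" unfolding X_def by simp
  have AX: "A * X = Y"
  proof (rule eq_matI)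
    fix i j assume "i < dim_row Y" "j < dim_col Y"
    then have i: "i < n" and j: "j < n" unfolding Y_def by auto
    have e: "(A * X) $$ (i,j) = (\<Sum>k<n. A $$ (i,k) * X $$ (k,j))"
      using A Xc i j n_def by (simp add: scalar_prod_def Matrix.row_def Matrix.col_def lessThan_atLeast0)
    show "(A * X) $$ (i,j) = Y $$ (i,j)"
    proof (cases "j < m")
      case True
      have "(\<Sum>k<n. A $$ (i,k) * X $$ (k,j)) = (\<Sum>k<n. if k = j then A $$ (i,k) else 0)"
        by (rule sum.cong) (use True j in \<open>auto simp: X_def\<close>)
      also have "\<dots> = A $$ (i,j)" using j by simp
      finally show ?thesis using e True i j by (simp add: Y_def)
    next
      case False
      have "(\<Sum>k<n. A $$ (i,k) * X $$ (k,j)) = (\<Sum>k<n. A $$ (i,k) * adj $$ (k,j))"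
        by (rule sum.cong) (use False j in \<open>auto simp: X_def\<close>)
      also have "\<dots> = (A * adj) $$ (i,j)"
        using A adjc i j n_def by (simp add: scalar_prod_def Matrix.row_def Matrix.col_def lessThan_atLeast0)
      also have "\<dots> = (if i = j then det A else 0)" using Aadj i j by simp
      finally show ?thesis using e False i j by (simp add: Y_def)
    qed
  qed (use A n_def in \<open>auto simp: Y_def X_def\<close>)
  define Y1 where "Y1 = mat m m (\<lambda>(i,j). A $$ (i,j))"
  define Y3 where "Y3 = mat 2 m (\<lambda>(i,j). A $$ (i+m,j))"
  define Y4 where "Y4 = det A \<cdot>\<^sub>m (1\<^sub>m 2 :: 'a mat)"
  have Yb: "Y = four_block_mat Y1 (0\<^sub>m m 2) Y3 Y4"
    by (rule eq_matI) (auto simp: Y_def Y1_def Y3_def Y4_def four_block_mat_def n_def)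
  have dY: "det Y = det Y1 * (det A * det A)"
    unfolding Yb by (subst det_four_block_mat_upper_right_zero[of _ m _ 2])
      (auto simp: Y1_def Y3_def Y4_def power2_eq_square)
  define X2 where "X2 = mat m 2 (\<lambda>(i,j). adj $$ (i,j+m))"
  define X4 where "X4 = mat 2 2 (\<lambda>(i,j). adj $$ (i+m,j+m))"
  have Xb: "X = four_block_mat (1\<^sub>m m) X2 (0\<^sub>m 2 m) X4"
    by (rule eq_matI) (auto simp: X_def X2_def X4_def four_block_mat_def n_def)
  have dX: "det X = det X4"
    unfolding Xb by (subst det_four_block_mat_lower_left_zero[of _ m _ 2]) (auto simp: X2_def X4_def)
  have adjij: "adj $$ (i,j) = cofactor A j i" if "i < n" "j < n" for i j
    using that A n_def by (simp add: adj_def adj_mat_def)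
  have dX4: "det X4 = cofactor A m m * cofactor A (Suc m) (Suc m) - cofactor A m (Suc m) * cofactor A (Suc m) m"
  proof -
    have "det X4 = X4$$(0,0) * X4$$(1,1) - X4$$(0,1) * X4$$(1,0)" by (rule det2) (simp add: X4_def)
    then show ?thesis using adjij n_def by (simp add: X4_def mult.commute)
  qed
  have "det A * det X = det Y"
    using det_mult[of A n X] A Xc AX n_def by simp
  then have "det A * det X4 = det A * (det A * det Y1)" using dX dY by (simp add: algebra_simps)
  then have "det X4 = det A * det Y1" using d by simp
  then show ?thesis using dX4 Y1_def by simp
qed


lemma wronskian_jacobi:
  assumes nz: "wronskian (F @ [g,h]) \<noteq> 0"
  shows "wronskian F * wronskian (F @ [g,h]) =
     wronskian (F@[g]) * pderiv (wronskian (F@[h])) - pderiv (wronskian (F@[g])) * wronskian (F@[h])"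
proof -
  define m where "m = length F"
  define M where "M = WM (F @ [g,h])"
  have Mc: "M \<in> carrier_mat (m+2) (m+2)" unfolding M_def m_def using WM_carrier[of "F@[g,h]"] by simp
  have dM: "det M \<noteq> 0" using nz unfolding M_def wr_WM .
  have e1: "mat_delete M m m = WD (F@[h])"
    by (rule eq_matI) (auto simp: mat_delete_def M_def WM_def WD_def m_def nth_append)
  have e2: "mat_delete M (Suc m) (Suc m) = WM (F@[g])"
    by (rule eq_matI) (auto simp: mat_delete_def M_def WM_def m_def nth_append)
  have e3: "mat_delete M m (Suc m) = WD (F@[g])"
    by (rule eq_matI) (auto simp: mat_delete_def M_def WM_def WD_def m_def nth_append)
  have e4: "mat_delete M (Suc m) m = WM (F@[h])"
    by (rule eq_matI) (auto simp: mat_delete_def M_def WM_def m_def nth_append)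
  have e5: "mat m m (\<lambda>(i,j). M $$ (i,j)) = WM F"
    by (rule eq_matI) (auto simp: M_def WM_def m_def nth_append)
  have c1: "cofactor M m m = pderiv (wronskian (F@[h]))"
    unfolding cofactor_def e1 wronskian_deriv[of "F@[h]", simplified] by simp
  have c2: "cofactor M (Suc m) (Suc m) = wronskian (F@[g])"
    unfolding cofactor_def e2 wr_WM by simp
  have c3: "cofactor M m (Suc m) = - pderiv (wronskian (F@[g]))"
    unfolding cofactor_def e3 wronskian_deriv[of "F@[g]", simplified] by simp
  have c4: "cofactor M (Suc m) m = - wronskian (F@[h])"
    unfolding cofactor_def e4 wr_WM by simp
  have "cofactor M m m * cofactor M (Suc m) (Suc m) - cofactor M m (Suc m) * cofactor M (Suc m) m
       = det M * det (mat m m (\<lambda>(i,j). M $$ (i,j)))"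
    by (rule desnanot[OF Mc dM])
  moreover have "det (mat m m (\<lambda>(i,j). M $$ (i,j))) = wronskian F" using e5 wr_WM by simp
  moreover have "det M = wronskian (F @ [g,h])" unfolding M_def wr_WM ..
  ultimately show ?thesis unfolding c1 c2 c3 c4 by (simp add: algebra_simps)
qed


lemma hermP_const:
  assumes "sorted_wrt (<) ns"
  shows "\<exists>c. c \<noteq> 0 \<and> hermP ns = smult c (wronskian (map herm ns))"
proof -
  define I where "I = {(i, j). i < j \<and> j < length ns}"
  have fin: "finite I" unfolding I_def
    by (rule finite_subset[of _ "{..<length ns} \<times> {..<length ns}"]) auto
  have "(\<Prod>(i, j) \<in> I. (of_nat (ns ! j - ns ! i) :: rat)) \<noteq> 0"
  proof -
    have "\<forall>x\<in>I. (case x of (i,j) \<Rightarrow> (of_nat (ns ! j - ns ! i) :: rat)) \<noteq> 0"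
      using sorted_wrt_nth_less[OF assms] unfolding I_def by fastforce
    then show ?thesis using fin by simp
  qed
  then show ?thesis unfolding hermP_def I_def[symmetric] by (intro exI[of _ "inverse _"]) simp
qed

lemma sorted_distinct: "sorted_wrt (<) (ns :: nat list) \<Longrightarrow> distinct ns"
  by (induction ns) auto

lemma hermR_fact:
  assumes s: "sorted_wrt (<) ns"
  shows "hermP ns = [:0,1:] ^ part_size (two_core (set ns)) * hermR ns \<and> poly (hermR ns) 0 \<noteq> 0"
proof -
  have d: "distinct ns" using sorted_distinct[OF s] .
  define r where "r = length ns"
  define m0 where "m0 = card {n\<in>set ns. n mod 2 = 0}"
  define m1 where "m1 = card {n\<in>set ns. n mod 2 = 1}"
  obtain Q where Q: "wronskian (map herm ns) = monom 1 (m0*(m0-1) + m1*m1 - (\<Sum>i<r. i)) * Q" "poly Q 0 \<noteq> 0"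
    using herm_order[OF d] unfolding r_def m0_def m1_def by blast
  have K: "part_size (two_core (set ns)) = m0*(m0-1) + m1*m1 - (\<Sum>i<r. i)"
    using core_size[of "set ns"] d unfolding pc_def m0_def m1_def r_def gauss_lt
    by (simp add: distinct_card)
  define K where "K = part_size (two_core (set ns))"
  obtain c where c: "c \<noteq> 0" "hermP ns = smult c (wronskian (map herm ns))" using hermP_const[OF s] by blast
  have hp: "hermP ns = [:0,1:] ^ K * smult c Q" unfolding X_pow_monom using c Q K K_def by (simp add: mult_smult_right)
  have "hermR ns = smult c Q" unfolding hermR_def K_def[symmetric] hp
    by (rule nonzero_mult_div_cancel_left) simp
  then show ?thesis using hp c Q K_def by simp
qed

lemma not_dvd_X_pow:
  fixes p :: "rat poly"
  assumes irr: "irreducible p" and p0: "poly p 0 \<noteq> 0"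
  shows "\<not> p dvd [:0,1:] ^ k"
proof
  assume "p dvd [:0,1:] ^ k"
  then have "p dvd [:0,1:]" using prime_elem_dvd_power prime_elem_iff_irreducible[THEN iffD2, OF irr] by blast
  then obtain q where q: "[:0,1:] = p * q" by (elim dvdE)
  have pn: "p \<noteq> 0" "q \<noteq> 0" using q by auto
  have "degree p \<noteq> 0" using irr pn is_unit_iff_degree irreducible_not_unit by blast
  moreover have "degree (p * q) = degree p + degree q" by (rule degree_mult_eq) (use pn in auto)
  moreover have "degree (p * q) = 1" unfolding q[symmetric] by simp
  ultimately have "degree q = 0" by simp
  then have qc: "q = [:coeff q 0:]" by (simp add: degree_0_id)
  have "poly ([:0,1:]::rat poly) 0 = poly (p * q) 0" by (subst q) (rule refl)
  then have "0 = poly p 0 * poly q 0" by (simp only: poly_mult) simp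
  then have "poly q 0 = 0" using p0 by simp
  then have "q = 0" using qc by (simp add: poly_0_coeff_0)
  with pn show False by simp
qed


lemma herm_W_facts:
  assumes s: "sorted_wrt (<) L"
  shows "\<exists>c k. c \<noteq> 0 \<and> wronskian (map herm L) = smult c ([:0,1:] ^ k * hermR L) \<and> poly (hermR L) 0 \<noteq> 0"
proof -
  obtain c where c: "c \<noteq> 0" "hermP L = smult c (wronskian (map herm L))" using hermP_const[OF s] by blast
  have h: "hermP L = [:0,1:] ^ part_size (two_core (set L)) * hermR L" "poly (hermR L) 0 \<noteq> 0"
    using hermR_fact[OF s] by auto
  have "wronskian (map herm L) = smult (inverse c) (hermP L)" using c by simp
  then show ?thesis using h c by (intro exI[of _ "inverse c"] exI[of _ "part_size (two_core (set L))"]) simp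
qed

theorem mainTheorem19:
  fixes ns :: "nat list" and r :: nat
  assumes "length ns = r" and "r \<ge> 2"
    and "sorted_wrt (<) ns"
    and "irreducible (hermR (butlast ns))"
    and "hermR (butlast ns) dvd hermR ns"
  shows "hermR (butlast ns) dvd hermR (take (r - 2) ns @ [last ns])"
proof -
  define F where "F = take (r-2) ns"
  have "length (drop (r-2) ns) = 2" using assms(1,2) by simp
  then obtain a b where ab: "drop (r-2) ns = [a,b]"
    by (metis (no_types, lifting) One_nat_def Suc_1 length_0_conv length_Suc_conv)
  have ns: "ns = F @ [a,b]" unfolding F_def using ab by (metis append_take_drop_id)
  have sD: "sorted_wrt (<) (F @ [a,b])" using assms(3) ns by simp
  then have sF: "sorted_wrt (<) F" "\<forall>x\<in>set F. x < a \<and> x < b" "a < b"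
    by (auto simp: sorted_wrt_append)
  have sB: "sorted_wrt (<) (F @ [a])" using sF by (auto simp: sorted_wrt_append)
  have sC: "sorted_wrt (<) (F @ [b])" using sF by (auto simp: sorted_wrt_append)
  have bl: "butlast ns = F @ [a]" using ns by (simp add: butlast_append)
  have "last ns = b" using ns by (metis last_ConsL last_ConsR last_appendR list.distinct(1))
  then have tl: "take (r - 2) ns @ [last ns] = F @ [b]" using F_def by simp
  define p where "p = hermR (F @ [a])"
  have irr: "irreducible p" using assms(4) bl p_def by simp
  have pr: "prime_elem p" using prime_elem_iff_irreducible[THEN iffD2, OF irr] .
  have pn: "p \<noteq> 0" using irr by auto
  have dp: "degree p \<noteq> 0" using irr pn is_unit_iff_degree irreducible_not_unit by blast
  have pD: "p dvd hermR (F @ [a,b])" using assms(5) bl ns p_def by simp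
  define WA where "WA = wronskian (map herm F)"
  define WB where "WB = wronskian (map herm F @ [herm a])"
  define WC where "WC = wronskian (map herm F @ [herm b])"
  define WD where "WD = wronskian (map herm F @ [herm a, herm b])"
  obtain cB kB where B: "cB \<noteq> 0" "WB = smult cB ([:0,1:] ^ kB * p)" "poly p 0 \<noteq> 0"
    using herm_W_facts[OF sB] unfolding WB_def p_def by auto
  obtain cC kC where C: "cC \<noteq> 0" "WC = smult cC ([:0,1:] ^ kC * hermR (F @ [b]))"
    using herm_W_facts[OF sC] unfolding WC_def by auto
  obtain cD kD where D: "cD \<noteq> 0" "WD = smult cD ([:0,1:] ^ kD * hermR (F @ [a,b]))"
      "poly (hermR (F @ [a,b])) 0 \<noteq> 0"
    using herm_W_facts[OF sD] unfolding WD_def by auto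
  have WDnz: "WD \<noteq> 0" using D by auto
  have jac: "WA * WD = WB * pderiv WC - pderiv WB * WC"
    unfolding WA_def WB_def WC_def WD_def by (rule wronskian_jacobi) (use WDnz WD_def in simp)
  have pWD: "p dvd WD" unfolding D(2) using pD by (simp add: dvd_smult)
  have pWB: "p dvd WB" unfolding B(2) by (simp add: dvd_smult)
  have "pderiv WB * WC = WB * pderiv WC - WA * WD" using jac by simp
  moreover have "p dvd WB * pderiv WC - WA * WD" using pWB pWD by (simp add: dvd_diff)
  ultimately have "p dvd pderiv WB * WC" by simp
  then have "p dvd pderiv WB \<or> p dvd WC" using prime_elem_dvd_mult_iff[OF pr] by blast
  moreover have "\<not> p dvd pderiv WB"
  proof
    assume h: "p dvd pderiv WB"
    have "pderiv WB = smult cB ([:0,1:] ^ kB * pderiv p + p * pderiv ([:0,1:] ^ kB))"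
      unfolding B(2) by (simp add: pderiv_smult pderiv_mult)
    then have "p dvd [:0,1:] ^ kB * pderiv p + p * pderiv ([:0,1:] ^ kB)"
      using h B(1) by (simp add: dvd_smult_iff)
    then have "p dvd [:0,1:] ^ kB * pderiv p" by (simp add: dvd_add_left_iff)
    then have "p dvd [:0,1:] ^ kB \<or> p dvd pderiv p" using prime_elem_dvd_mult_iff[OF pr] by blast
    moreover have "\<not> p dvd [:0,1:] ^ kB" using not_dvd_X_pow[OF irr B(3)] .
    moreover have "\<not> p dvd pderiv p"
    proof
      assume "p dvd pderiv p"
      moreover have "pderiv p \<noteq> 0" using dp by (simp add: pderiv_eq_0_iff)
      ultimately have "degree p \<le> degree (pderiv p)" by (rule dvd_imp_degree_le)
      then show False using dp by (simp add: degree_pderiv)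
    qed
    ultimately show False by blast
  qed
  ultimately have "p dvd WC" by blast
  then have "p dvd [:0,1:] ^ kC * hermR (F @ [b])" using C by (simp add: dvd_smult_iff)
  then have "p dvd hermR (F @ [b])"
    using prime_elem_dvd_mult_iff[OF pr] not_dvd_X_pow[OF irr B(3)] by blast
  then show ?thesis using bl tl p_def by simp
qed


end
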